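(* Let $(\Omega,\mathcal{F},\mathbb{P})$ be a complete probability space, let $E$ be a Polish space, and let $X=\{X_t\}_{t\geq0}$ be an $E$-valued stochastic process that is measurable, i.e. the map $(\omega,t)\mapsto X_t(\omega)$ is $\mathcal{F}\otimes\mathcal{B}([0,\infty))/\mathcal{B}(E)$-measurable. Let $AP$ be a set of atomic propositions and assign to each $a\in AP$ a Borel set $B_a\subset E$. Then for every MTL-formula $\phi$, the set $\llbracket\phi\rrbracket=\{(\omega,t)\in\Omega\times[0,\infty) : X(\omega),t\models\phi\}$ belongs to $\mathcal{F}\otimes\mathcal{B}([0,\infty))$, and for every $t\geq0$ the set $\llbracket\phi\rrbracket(t)=\{\omega\in\Omega : X(\omega),t\models\phi\}$ belongs to $\mathcal{F}$.
   Context: MTL-formulas are generated by the grammar $\phi::=a\mid\phi_1\wedge\phi_2\mid\lnot\phi\mid\phi_1\mathcal{U}_I\phi_2$, where $a\in AP$ and $I$ is an interval in $[0,\infty)$ (closed, open, or half-open; unbounded intervals allowed). The continuous semantics, for a path $X(\omega)$ ($\omega$ fixed) and $t\geq0$: $X(\omega),t\models a$ iff $X_t(\omega)\in B_a$; $X(\omega),t\models\lnot\phi$ iff not $X(\omega),t\models\phi$; $X(\omega),t\models\phi_1\wedge\phi_2$ iff both $X(\omega),t\models\phi_1$ and $X(\omega),t\models\phi_2$; $X(\omega),t\models\phi_1\mathcal{U}_I\phi_2$ iff there exists $s\in I$ such that $X(\omega),t+s\models\phi_2$ and for all $s'\in[t,t+s)$, $X(\omega),s'\models\phi_1$. A probability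 space is complete if every subset of a null set is measurable. *)

theory Defs
  imports "HOL-Probability.Probability"
begin

datatype interval = Intv (lower: real) (lower_closed: bool) (upper: ereal) (upper_closed: bool)

definition intv_set :: "interval \<Rightarrow> real set" where
  "intv_set I = {s. 0 \<le> s \<and>
      (if lower_closed I then lower I \<le> s else lower I < s) \<and>
      (if upper_closed I then ereal s \<le> upper I else ereal s < upper I)}"

datatype 'ap mtl =
    Atom 'ap
  | And "'ap mtl" "'ap mtl"
  | Not "'ap mtl"
  | Until "'ap mtl" interval "'ap mtl"

fun holds :: "(real \<Rightarrow> 'w \<Rightarrow> 'e) \<Rightarrow> ('ap \<Rightarrow> 'e set) \<Rightarrow> 'w \<Rightarrow> real \<Rightarrow> 'ap mtl \<Rightarrow> bool" where
  "holds X B \<omega> t (Atom a) \<longleftrightarrow> X t \<omega> \<in> B a"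
| "holds X B \<omega> t (And \<phi>1 \<phi>2) \<longleftrightarrow> holds X B \<omega> t \<phi>1 \<and> holds X B \<omega> t \<phi>2"
| "holds X B \<omega> t (Not \<phi>) \<longleftrightarrow> \<not> holds X B \<omega> t \<phi>"
| "holds X B \<omega> t (Until \<phi>1 I \<phi>2) \<longleftrightarrow>
     (\<exists>s\<in>intv_set I. holds X B \<omega> (t + s) \<phi>2 \<and>
        (\<forall>s'\<in>{t..<t + s}. holds X B \<omega> s' \<phi>1))"

definition sat_set :: "'w measure \<Rightarrow> (real \<Rightarrow> 'w \<Rightarrow> 'e) \<Rightarrow> ('ap \<Rightarrow> 'e set) \<Rightarrow> 'ap mtl \<Rightarrow> ('w \<times> real) set" where
  "sat_set M X B \<phi> = {(\<omega>, t). \<omega> \<in> space M \<and> 0 \<le> t \<and> holds X B \<omega> t \<phi>}"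

definition sat_set_at :: "'w measure \<Rightarrow> (real \<Rightarrow> 'w \<Rightarrow> 'e) \<Rightarrow> ('ap \<Rightarrow> 'e set) \<Rightarrow> 'ap mtl \<Rightarrow> real \<Rightarrow> 'w set" where
  "sat_set_at M X B \<phi> t = {\<omega> \<in> space M. holds X B \<omega> t \<phi>}"

end

theory Submission
  imports Defs
begin

definition suslin :: "(nat list \<Rightarrow> 'a set) \<Rightarrow> 'a set" where
  "suslin E = {x. \<exists>\<sigma>. \<forall>n. x \<in> E (map \<sigma> [0..<Suc n])}"

lemma hull_exists:
  assumes fm: "finite_measure M" and S: "S \<subseteq> space M"
  shows "\<exists>H\<in>sets M. S \<subseteq> H \<and> (\<forall>D\<in>sets M. D \<subseteq> H \<longrightarrow> D \<inter> S = {} \<longrightarrow> D \<in> null_sets M)"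
proof -
  interpret finite_measure M by fact
  define Ms where "Ms = measure M ` {G \<in> sets M. S \<subseteq> G}"
  define m where "m = Inf Ms"
  have ne: "Ms \<noteq> {}" using S unfolding Ms_def by auto
  have bdd: "bdd_below Ms" unfolding Ms_def by (intro bdd_belowI[of _ 0]) auto
  have "\<forall>n::nat. \<exists>G. G \<in> sets M \<and> S \<subseteq> G \<and> measure M G < m + 1 / (Suc n)"
  proof
    fix n :: nat
    have "m < m + 1 / Suc n" by simp
    then obtain y where "y \<in> Ms" "y < m + 1 / Suc n"
      using cInf_less_iff[OF ne bdd] unfolding m_def by blast
    then show "\<exists>G. G \<in> sets M \<and> S \<subseteq> G \<and> measure M G < m + 1 / (Suc n)"
      unfolding Ms_def by auto
  qed
  then obtain G where G: "\<And>n. G n \<in> sets M" "\<And>n. S \<subseteq> G n" "\<And>n. measure M (G n) < m + 1 / Suc n"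
    by metis
  define H where "H = (\<Inter>n. G n)"
  have H: "H \<in> sets M" unfolding H_def using G by auto
  have SH: "S \<subseteq> H" unfolding H_def using G by auto
  have lowm: "\<And>G'. G' \<in> sets M \<Longrightarrow> S \<subseteq> G' \<Longrightarrow> m \<le> measure M G'"
    unfolding m_def Ms_def by (rule cInf_lower) (use bdd Ms_def in auto)
  have "measure M H \<le> m"
  proof (rule field_le_epsilon)
    fix e :: real assume e: "0 < e"
    obtain n :: nat where n: "1 / Suc n < e"
      using e by (metis nat_approx_posE)
    have "measure M H \<le> measure M (G n)"
      using G H unfolding H_def by (intro finite_measure_mono) auto
    also have "\<dots> < m + e" using G(3)[of n] n by simp
    finally show "measure M H \<le> m + e" by simp
  qed
  show ?thesis
  proof (intro bexI conjI ballI impI)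
    fix D assume D: "D \<in> sets M" "D \<subseteq> H" "D \<inter> S = {}"
    have "m \<le> measure M (H - D)" using D H SH by (intro lowm) auto
    also have "measure M (H - D) = measure M H - measure M D"
      using D H by (intro finite_measure_Diff) auto
    finally have "measure M D = 0" using \<open>measure M H \<le> m\<close> measure_nonneg[of M D] by linarith
    then show "D \<in> null_sets M" using D by (simp add: emeasure_eq_measure null_sets_def)
  qed (use H SH in auto)
qed

lemma map_upt_snoc: "map \<sigma> [0..<Suc n] = map \<sigma> [0..<n] @ [\<sigma> n]"
  by simp

lemma suslin_complete:
  assumes fm: "finite_measure M" and cm: "complete_measure M"
    and E: "\<And>s. s \<noteq> [] \<Longrightarrow> E s \<in> sets M"
  shows "suslin E \<in> sets M"
proof -
  define A where "A s = {x. \<exists>\<sigma>. (\<forall>n. x \<in> E (map \<sigma> [0..<Suc n])) \<and> map \<sigma> [0..<length s] = s}" for s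
  have Asp: "A s \<subseteq> space M" for s
  proof
    fix x assume "x \<in> A s"
    then obtain \<sigma> where "x \<in> E (map \<sigma> [0..<Suc 0])" unfolding A_def by blast
    then show "x \<in> space M" using E[of "map \<sigma> [0..<Suc 0]"] sets.sets_into_space by auto
  qed
  have "\<forall>s. \<exists>H. H \<in> sets M \<and> A s \<subseteq> H \<and> (\<forall>D\<in>sets M. D \<subseteq> H \<longrightarrow> D \<inter> A s = {} \<longrightarrow> D \<in> null_sets M)"
  proof
    fix s show "\<exists>H. H \<in> sets M \<and> A s \<subseteq> H \<and> (\<forall>D\<in>sets M. D \<subseteq> H \<longrightarrow> D \<inter> A s = {} \<longrightarrow> D \<in> null_sets M)"
      using hull_exists[OF fm Asp[of s]] unfolding Bex_def .
  qed
  then obtain H where H0: "\<forall>s. H s \<in> sets M \<and> A s \<subseteq> H s \<and> (\<forall>D\<in>sets M. D \<subseteq> H s \<longrightarrow> D \<inter> A s = {} \<longrightarrow> D \<in> null_sets M)"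
    unfolding choice_iff by blast
  have H: "\<And>s. H s \<in> sets M" "\<And>s. A s \<subseteq> H s"
    "\<And>s D. D \<in> sets M \<Longrightarrow> D \<subseteq> H s \<Longrightarrow> D \<inter> A s = {} \<Longrightarrow> D \<in> null_sets M"
    using H0 by blast+
  define H' where "H' s = H s \<inter> (if s = [] then space M else E s)" for s
  have H'sets: "H' s \<in> sets M" for s using H E unfolding H'_def by auto
  have AE: "A s \<subseteq> E s" if sne: "s \<noteq> []" for s
  proof
    fix x assume "x \<in> A s"
    then obtain \<sigma> where s: "\<forall>n. x \<in> E (map \<sigma> [0..<Suc n])" "map \<sigma> [0..<length s] = s"
      unfolding A_def by blast
    have "length s \<noteq> 0" using sne by simp
    then obtain n where n: "length s = Suc n" using not0_implies_Suc by blast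
    have "map \<sigma> [0..<Suc n] = s" using s(2) unfolding n .
    then show "x \<in> E s" using s(1) by metis
  qed
  have AH': "A s \<subseteq> H' s" for s
  proof (cases "s = []")
    case True then show ?thesis using H(2)[of s] Asp[of s] unfolding H'_def by simp
  next
    case False then show ?thesis using H(2)[of s] AE[OF False] unfolding H'_def by simp
  qed
  define D where "D s = H' s - (\<Union>i. H' (s @ [i]))" for s
  have Dnull: "D s \<in> null_sets M" for s
  proof (rule H(3))
    show "D s \<in> sets M" unfolding D_def using H'sets by auto
    show "D s \<subseteq> H s" unfolding D_def H'_def by auto
    show "D s \<inter> A s = {}"
    proof safe
      fix x assume x: "x \<in> D s" "x \<in> A s"
      then obtain \<sigma> where s: "\<forall>n. x \<in> E (map \<sigma> [0..<Suc n])" "map \<sigma> [0..<length s] = s"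
        unfolding A_def by blast
      then have "x \<in> A (s @ [\<sigma> (length s)])" unfolding A_def
        by (intro CollectI exI[of _ \<sigma>]) simp
      then show "x \<in> {}" using x AH' unfolding D_def by blast
    qed
  qed
  define N where "N = (\<Union>s. D s)"
  have Nnull: "N \<in> null_sets M" unfolding N_def
    by (rule null_sets_UN') (auto simp: Dnull)
  have main: "H' [] - N \<subseteq> suslin E"
  proof
    fix x assume x: "x \<in> H' [] - N"
    have step: "\<exists>i. x \<in> H' (s @ [i])" if "x \<in> H' s" for s
      using that x unfolding N_def D_def by blast
    define f where "f s = (SOME i. x \<in> H' (s @ [i]))" for s
    define p where "p = rec_nat [] (\<lambda>n ps. ps @ [f ps])"
    have p0: "p 0 = []" and pS: "p (Suc n) = p n @ [f (p n)]" for n unfolding p_def by simp_all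
    have inv: "x \<in> H' (p n)" for n
    proof (induction n)
      case 0 then show ?case using x p0 by simp
    next
      case (Suc n) then show ?case unfolding pS f_def by (rule someI_ex[OF step])
    qed
    define \<sigma> where "\<sigma> n = f (p n)" for n
    have pm: "p n = map \<sigma> [0..<n]" for n
      by (induction n) (simp_all add: p0 pS \<sigma>_def)
    have "x \<in> E (map \<sigma> [0..<Suc n])" for n
      using inv[of "Suc n"] unfolding pm H'_def by auto
    then show "x \<in> suslin E" unfolding suslin_def by blast
  qed
  have sub: "suslin E \<subseteq> H' []"
    using AH'[of "[]"] unfolding A_def suslin_def by auto
  have eq: "suslin E = (H' [] - N) \<union> (suslin E \<inter> N)" using main sub by blast
  have "suslin E \<inter> N \<in> sets M"
    using complete_measure.complete[OF cm, of "suslin E \<inter> N" N] Nnull by simp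
  moreover have "H' [] - N \<in> sets M" using H'sets[of "[]"] Nnull by auto
  ultimately have "(H' [] - N) \<union> (suslin E \<inter> N) \<in> sets M" by (rule sets.Un[rotated])
  then show ?thesis by (subst eq, assumption)
qed

definition rect :: "'w measure \<Rightarrow> ('w \<times> real) set set" where
  "rect M = {F \<times> K | F K. F \<in> sets M \<and> compact K}"

definition SS :: "'w measure \<Rightarrow> ('w \<times> real) set set" where
  "SS M = {A. \<exists>E. (\<forall>s. E s \<in> rect M) \<and> A = suslin E}"

lemma rect_empty: "{} \<in> rect M"
  unfolding rect_def by (intro CollectI exI[of _ "{}"]) auto

lemma rect_Inter:
  assumes "countable X" "X \<noteq> {}" "X \<subseteq> rect M"
  shows "\<Inter>X \<in> rect M"
proof -
  have "\<forall>R\<in>X. \<exists>FK. R = fst FK \<times> snd FK \<and> fst FK \<in> sets M \<and> compact (snd FK)"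
  proof
    fix R assume "R \<in> X"
    then obtain F K where "R = F \<times> K" "F \<in> sets M" "compact K" using assms(3) unfolding rect_def by blast
    then show "\<exists>FK. R = fst FK \<times> snd FK \<and> fst FK \<in> sets M \<and> compact (snd FK)"
      by (intro exI[of _ "(F, K)"]) simp
  qed
  then obtain g where g: "\<forall>R\<in>X. R = fst (g R) \<times> snd (g R) \<and> fst (g R) \<in> sets M \<and> compact (snd (g R))"
    by (rule bchoice[THEN exE]) blast
  define F where "F = (\<Inter>R\<in>X. fst (g R))"
  define K where "K = (\<Inter>R\<in>X. snd (g R))"
  have eq: "\<Inter>X = F \<times> K"
  proof (intro set_eqI iffI)
    fix p assume "p \<in> \<Inter>X"
    then show "p \<in> F \<times> K" using g unfolding F_def K_def by (cases p) (metis (no_types, lifting) INT_I Inter_iff SigmaE2 mem_Sigma_iff)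
  next
    fix p assume "p \<in> F \<times> K"
    then show "p \<in> \<Inter>X" using g unfolding F_def K_def by (cases p) (metis (no_types, lifting) INT_D Inter_iff mem_Sigma_iff)
  qed
  have "F \<in> sets M" unfolding F_def using g assms by (intro sets.countable_INT') auto
  moreover have "compact K"
  proof -
    obtain R0 where R0: "R0 \<in> X" using assms(2) by blast
    have "K = snd (g R0) \<inter> K" unfolding K_def using R0 by blast
    moreover have "closed K" unfolding K_def using g by (intro closed_INT) (auto intro: compact_imp_closed)
    ultimately show ?thesis using g R0 by (metis compact_Int_closed)
  qed
  ultimately show ?thesis unfolding eq rect_def by blast
qed

lemma suslin_const: "suslin (\<lambda>_. R) = R"
  unfolding suslin_def by auto

lemma SS_rect: "R \<in> rect M \<Longrightarrow> R \<in> SS M"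
  unfolding SS_def by (intro CollectI exI[of _ "\<lambda>_. R"]) (simp add: suslin_const)

lemma SS_UN:
  assumes "\<And>k::nat. A k \<in> SS M"
  shows "(\<Union>k. A k) \<in> SS M"
proof -
  have "\<forall>k. \<exists>E. (\<forall>s. E s \<in> rect M) \<and> A k = suslin E" using assms unfolding SS_def by blast
  then obtain S where S: "\<And>k s. S k s \<in> rect M" "\<And>k. A k = suslin (S k)"
    unfolding choice_iff by blast
  define T where "T s = (case s of [] \<Rightarrow> {} | c # t \<Rightarrow> S (fst (prod_decode c)) (snd (prod_decode c) # t))" for s
  have Trect: "T s \<in> rect M" for s unfolding T_def using S(1) rect_empty by (cases s) auto
  have "(\<Union>k. A k) = suslin T"
  proof (intro set_eqI iffI)
    fix x assume "x \<in> (\<Union>k. A k)"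
    then obtain k \<tau> where \<tau>: "\<And>n. x \<in> S k (map \<tau> [0..<Suc n])" using S(2) unfolding suslin_def by blast
    define \<sigma> where "\<sigma> i = (if i = 0 then prod_encode (k, \<tau> 0) else \<tau> i)" for i
    have "x \<in> T (map \<sigma> [0..<Suc n])" for n
      using \<tau>[of n] unfolding map_upt_Suc T_def \<sigma>_def by simp
    then show "x \<in> suslin T" unfolding suslin_def by blast
  next
    fix x assume "x \<in> suslin T"
    then obtain \<sigma> where \<sigma>: "\<And>n. x \<in> T (map \<sigma> [0..<Suc n])" unfolding suslin_def by blast
    define k where "k = fst (prod_decode (\<sigma> 0))"
    define \<tau> where "\<tau> i = (if i = 0 then snd (prod_decode (\<sigma> 0)) else \<sigma> i)" for i
    have "x \<in> S k (map \<tau> [0..<Suc n])" for n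
      using \<sigma>[of n] unfolding map_upt_Suc T_def \<tau>_def k_def by simp
    then have "x \<in> A k" using S(2) unfolding suslin_def by blast
    then show "x \<in> (\<Union>k. A k)" by blast
  qed
  then show ?thesis unfolding SS_def using Trect by blast
qed

lemma prod_encode_mono2:
  assumes "i \<le> m" shows "prod_encode (k, i) \<le> prod_encode (k, m)"
proof -
  have "triangle (k + i) \<le> triangle (k + m)"
    using assms unfolding triangle_def by (intro div_le_mono mult_le_mono) auto
  then show ?thesis unfolding prod_encode_def by simp
qed

lemma SS_INT:
  assumes "\<And>k::nat. A k \<in> SS M"
  shows "(\<Inter>k. A k) \<in> SS M"
proof -
  have "\<forall>k. \<exists>E. (\<forall>s. E s \<in> rect M) \<and> A k = suslin E" using assms unfolding SS_def by blast
  then obtain S where S: "\<And>k s. S k s \<in> rect M" "\<And>k. A k = suslin (S k)"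
    unfolding choice_iff by blast
  define idx where "idx s = {(k, m). \<forall>i\<le>m. prod_encode (k, i) < length s}" for s :: "nat list"
  define g where "g s = (\<lambda>(k, m). S k (map (\<lambda>i. s ! prod_encode (k, i)) [0..<Suc m]))" for s
  define T where "T s = (if s = [] then {} else \<Inter>(g s ` idx s))" for s
  have Trect: "T s \<in> rect M" for s
  proof (cases "s = []")
    case True then show ?thesis unfolding T_def using rect_empty by simp
  next
    case False
    then have "(0, 0) \<in> idx s" unfolding idx_def by (simp add: prod_encode_def)
    have "T s = \<Inter>(g s ` idx s)" unfolding T_def using False by simp
    moreover have "\<Inter>(g s ` idx s) \<in> rect M"
    proof (rule rect_Inter)
      show "countable (g s ` idx s)" by (rule countable_image) (rule countableI_type)
      show "g s ` idx s \<noteq> {}" using \<open>(0, 0) \<in> idx s\<close> by blast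
      show "g s ` idx s \<subseteq> rect M" using S(1) unfolding g_def by auto
    qed
    ultimately show ?thesis by simp
  qed
  have "(\<Inter>k. A k) = suslin T"
  proof (intro set_eqI iffI)
    fix x assume "x \<in> (\<Inter>k. A k)"
    then have "\<forall>k. \<exists>\<tau>. \<forall>n. x \<in> S k (map \<tau> [0..<Suc n])" using S(2) unfolding suslin_def by blast
    then obtain \<tau> where \<tau>: "\<And>k n. x \<in> S k (map (\<tau> k) [0..<Suc n])" unfolding choice_iff by blast
    define \<sigma> where "\<sigma> j = \<tau> (fst (prod_decode j)) (snd (prod_decode j))" for j
    have "x \<in> T (map \<sigma> [0..<Suc n])" for n
    proof -
      have "x \<in> g (map \<sigma> [0..<Suc n]) km" if "km \<in> idx (map \<sigma> [0..<Suc n])" for km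
      proof -
        obtain k m where km: "km = (k, m)" by (cases km)
        have "map (\<lambda>i. map \<sigma> [0..<Suc n] ! prod_encode (k, i)) [0..<Suc m] = map (\<tau> k) [0..<Suc m]"
          using that unfolding km idx_def by (intro map_cong) (auto simp del: upt_Suc simp: \<sigma>_def)
        then have "g (map \<sigma> [0..<Suc n]) km = S k (map (\<tau> k) [0..<Suc m])"
          unfolding g_def km prod.case by (rule arg_cong)
        then show ?thesis using \<tau>[of k m] by (rule ssubst)
      qed
      then show ?thesis unfolding T_def by auto
    qed
    then show "x \<in> suslin T" unfolding suslin_def by blast
  next
    fix x assume "x \<in> suslin T"
    then obtain \<sigma> where \<sigma>: "\<And>n. x \<in> T (map \<sigma> [0..<Suc n])" unfolding suslin_def by blast
    have "x \<in> A k" for k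
    proof -
      define \<tau> where "\<tau> i = \<sigma> (prod_encode (k, i))" for i
      have "x \<in> S k (map \<tau> [0..<Suc m])" for m
      proof -
        define n where "n = prod_encode (k, m)"
        have mem: "(k, m) \<in> idx (map \<sigma> [0..<Suc n])"
          unfolding idx_def n_def using prod_encode_mono2 by (auto simp: less_Suc_eq_le)
        then have "x \<in> g (map \<sigma> [0..<Suc n]) (k, m)" using \<sigma>[of n] unfolding T_def by auto
        moreover have "map (\<lambda>i. map \<sigma> [0..<Suc n] ! prod_encode (k, i)) [0..<Suc m] = map \<tau> [0..<Suc m]"
          using mem unfolding idx_def by (intro map_cong) (auto simp del: upt_Suc simp: \<tau>_def)
        moreover have "g (map \<sigma> [0..<Suc n]) (k, m) = S k (map (\<lambda>i. map \<sigma> [0..<Suc n] ! prod_encode (k, i)) [0..<Suc m])"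
          unfolding g_def prod.case by (rule refl)
        ultimately show ?thesis by metis
      qed
      then show "x \<in> A k" using S(2) unfolding suslin_def by blast
    qed
    then show "x \<in> (\<Inter>k. A k)" by blast
  qed
  then show ?thesis unfolding SS_def using Trect by blast
qed

lemma take_map_upt: "j < Suc n \<Longrightarrow> take (Suc j) (map \<sigma> [0..<Suc n]) = map \<sigma> [0..<Suc j]"
  by (simp del: upt_Suc add: take_map)

lemma proj_suslin:
  assumes E: "\<And>s. E s \<in> rect M"
  shows "fst ` suslin E = suslin (\<lambda>s. fst ` (\<Inter>j\<in>{..<length s}. E (take (Suc j) s)))"
proof (intro set_eqI iffI)
  fix \<omega> assume "\<omega> \<in> fst ` suslin E"
  then obtain t \<sigma> where \<sigma>: "\<And>n. (\<omega>, t) \<in> E (map \<sigma> [0..<Suc n])"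
    unfolding suslin_def by force
  have "\<omega> \<in> fst ` (\<Inter>j\<in>{..<length (map \<sigma> [0..<Suc n])}. E (take (Suc j) (map \<sigma> [0..<Suc n])))" for n
  proof (rule image_eqI[of _ _ "(\<omega>, t)"])
    show "(\<omega>, t) \<in> (\<Inter>j\<in>{..<length (map \<sigma> [0..<Suc n])}. E (take (Suc j) (map \<sigma> [0..<Suc n])))"
      using \<sigma> by (auto simp del: upt_Suc simp: take_map_upt)
  qed simp
  then show "\<omega> \<in> suslin (\<lambda>s. fst ` (\<Inter>j\<in>{..<length s}. E (take (Suc j) s)))"
    unfolding suslin_def by blast
next
  fix \<omega> assume "\<omega> \<in> suslin (\<lambda>s. fst ` (\<Inter>j\<in>{..<length s}. E (take (Suc j) s)))"
  then obtain \<sigma> where \<sigma>: "\<And>n. \<omega> \<in> fst ` (\<Inter>j\<in>{..<length (map \<sigma> [0..<Suc n])}. E (take (Suc j) (map \<sigma> [0..<Suc n])))"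
    unfolding suslin_def by blast
  define Em where "Em n = (\<Inter>j\<in>{..<Suc n}. E (map \<sigma> [0..<Suc j]))" for n
  have Em_eq: "(\<Inter>j\<in>{..<length (map \<sigma> [0..<Suc n])}. E (take (Suc j) (map \<sigma> [0..<Suc n]))) = Em n" for n
    unfolding Em_def by (auto simp del: upt_Suc simp: take_map_upt)
  have Em_rect: "Em n \<in> rect M" for n
    unfolding Em_def using E by (intro rect_Inter) auto
  define Kn where "Kn n = {t. (\<omega>, t) \<in> Em n}" for n
  have Kne: "Kn n \<noteq> {}" for n using \<sigma>[of n] unfolding Em_eq Kn_def by force
  have Kc: "compact (Kn n)" for n
  proof -
    obtain F K where FK: "Em n = F \<times> K" "compact K" using Em_rect[of n] unfolding rect_def by blast
    then have "Kn n = (if \<omega> \<in> F then K else {})" unfolding Kn_def by auto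
    then show ?thesis using FK by auto
  qed
  have Kmono: "Kn n \<subseteq> Kn m" if "m \<le> n" for m n
    using that unfolding Kn_def Em_def by auto
  have "\<Inter>(range Kn) \<noteq> {}" by (rule compact_nest[OF Kc Kne Kmono])
  then obtain t where t: "\<And>n. t \<in> Kn n" by blast
  have "(\<omega>, t) \<in> E (map \<sigma> [0..<Suc n])" for n using t[of n] unfolding Kn_def Em_def by auto
  then have "(\<omega>, t) \<in> suslin E" unfolding suslin_def by blast
  then show "\<omega> \<in> fst ` suslin E" by force
qed

lemma rect_fst: "R \<in> rect M \<Longrightarrow> fst ` R \<in> sets M"
proof -
  assume "R \<in> rect M"
  then obtain F K where FK: "R = F \<times> K" "F \<in> sets M" unfolding rect_def by blast
  then have "fst ` R = (if K = {} then {} else F)" by auto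
  then show ?thesis using FK by simp
qed

lemma SS_proj:
  assumes fm: "finite_measure M" and cm: "complete_measure M" and A: "A \<in> SS M"
  shows "fst ` A \<in> sets M"
proof -
  obtain E where E: "\<And>s. E s \<in> rect M" and AE: "A = suslin E" using A unfolding SS_def by blast
  have "suslin (\<lambda>s. fst ` (\<Inter>j\<in>{..<length s}. E (take (Suc j) s))) \<in> sets M"
  proof (rule suslin_complete[OF fm cm])
    fix s :: "nat list" assume "s \<noteq> []"
    then have "(\<Inter>j\<in>{..<length s}. E (take (Suc j) s)) \<in> rect M"
      using E by (intro rect_Inter) auto
    then show "fst ` (\<Inter>j\<in>{..<length s}. E (take (Suc j) s)) \<in> sets M" by (rule rect_fst)
  qed
  then show ?thesis unfolding AE proj_suslin[OF E] .
qed

lemma SS_strip: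
  assumes "F \<in> sets M" shows "F \<times> {0::real..} \<in> SS M"
proof -
  have "F \<times> {0::real..} = (\<Union>n::nat. F \<times> {0..real n})"
  proof (intro set_eqI iffI)
    fix p assume "p \<in> F \<times> {0::real..}"
    moreover obtain n :: nat where "snd p \<le> real n" using real_arch_simple by blast
    ultimately show "p \<in> (\<Union>n::nat. F \<times> {0..real n})" by (cases p) auto
  qed auto
  moreover have "F \<times> {0..real n} \<in> SS M" for n
    using assms by (intro SS_rect) (auto simp: rect_def)
  ultimately show ?thesis by (simp add: SS_UN)
qed

lemma compl_interval_SS:
  assumes "S \<in> sets M"
  shows "S \<times> ({0::real..} - {a..b}) \<in> SS M"
proof -
  have "S \<times> ({0::real..} - {a..b}) = (\<Union>n::nat. S \<times> ({0..real n} - {a - 1 / Suc n <..< b + 1 / Suc n}))"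
  proof (intro set_eqI iffI)
    fix p assume p: "p \<in> S \<times> ({0::real..} - {a..b})"
    obtain w t where pt: "p = (w, t)" by (cases p)
    have w: "w \<in> S" and t0: "0 \<le> t" and tab: "t < a \<or> b < t" using p pt by auto
    define d where "d = (if t < a then a - t else t - b)"
    have d: "0 < d" using tab unfolding d_def by auto
    obtain n :: nat where n: "max t (1 / d) < real n" using reals_Archimedean2 by blast
    have "1 < d * real n" using n d by (simp add: field_simps)
    then have "1 < d * real (Suc n)" using d by (simp add: algebra_simps)
    then have e: "1 / real (Suc n) < d" by (simp add: field_simps)
    have "t \<notin> {a - 1 / Suc n <..< b + 1 / Suc n}"
      using e tab unfolding d_def by (auto split: if_splits)
    then show "p \<in> (\<Union>n::nat. S \<times> ({0..real n} - {a - 1 / Suc n <..< b + 1 / Suc n}))"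
      using pt w t0 n by (intro UN_I[of n]) auto
  next
    fix p assume "p \<in> (\<Union>n::nat. S \<times> ({0..real n} - {a - 1 / Suc n <..< b + 1 / Suc n}))"
    then obtain n :: nat where p: "p \<in> S \<times> ({0..real n} - {a - 1 / Suc n <..< b + 1 / Suc n})" by blast
    have e: "0 < 1 / real (Suc n)" by simp
    obtain w t where pt: "p = (w, t)" by (cases p)
    have w: "w \<in> S" "0 \<le> t" "\<not> (a - 1 / Suc n < t \<and> t < b + 1 / Suc n)" using p pt by auto
    have "\<not> (a \<le> t \<and> t \<le> b)" using w(3) e by smt
    then show "p \<in> S \<times> ({0::real..} - {a..b})" using pt w by auto
  qed
  moreover have "S \<times> ({0..real n} - {a - 1 / Suc n <..< b + 1 / Suc n}) \<in> SS M" for n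
  proof (intro SS_rect)
    have "compact ({0..real n} - {a - 1 / Suc n <..< b + 1 / Suc n})"
      by (intro compact_diff compact_Icc open_greaterThanLessThan)
    then show "S \<times> ({0..real n} - {a - 1 / Suc n <..< b + 1 / Suc n}) \<in> rect M"
      using assms unfolding rect_def by blast
  qed
  ultimately show ?thesis by (simp add: SS_UN)
qed

lemma sets_pair_SS:
  assumes A: "A \<in> sets (M \<Otimes>\<^sub>M restrict_space borel {0::real..})"
  shows "A \<in> SS M"
proof -
  define \<Omega> where "\<Omega> = space M \<times> {0::real..}"
  define C where "C = {A. A \<subseteq> \<Omega> \<and> A \<in> SS M \<and> \<Omega> - A \<in> SS M}"
  have OSS: "\<Omega> \<in> SS M" unfolding \<Omega>_def by (intro SS_strip sets.top)
  have emptySS: "{} \<in> SS M" by (intro SS_rect rect_empty)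
  have sa: "sigma_algebra \<Omega> C"
    unfolding sigma_algebra_iff2
  proof (intro conjI allI ballI impI)
    show "C \<subseteq> Pow \<Omega>" unfolding C_def by auto
    show "{} \<in> C" unfolding C_def using OSS emptySS by simp
  next
    fix s assume "s \<in> C"
    moreover have "\<Omega> - (\<Omega> - s) = s" if "s \<subseteq> \<Omega>" using that by blast
    ultimately show "\<Omega> - s \<in> C" unfolding C_def by auto
  next
    fix A :: "nat \<Rightarrow> _" assume "range A \<subseteq> C"
    then have A: "\<And>i. A i \<subseteq> \<Omega>" "\<And>i. A i \<in> SS M" "\<And>i. \<Omega> - A i \<in> SS M" unfolding C_def by auto
    have "\<Omega> - (\<Union>i. A i) = (\<Inter>i. \<Omega> - A i)" by blast
    moreover have "(\<Inter>i. \<Omega> - A i) \<in> SS M" using A(3) by (rule SS_INT)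
    ultimately have "\<Omega> - (\<Union>i. A i) \<in> SS M" by simp
    moreover have "(\<Union>i. A i) \<in> SS M" using A(2) by (rule SS_UN)
    ultimately show "(\<Union>i. A i) \<in> C" unfolding C_def using A(1) by blast
  qed
  interpret C: sigma_algebra \<Omega> C by (fact sa)
  have strip: "F \<times> {0..} \<in> C" if "F \<in> sets M" for F
  proof -
    have "\<Omega> - F \<times> {0..} = (space M - F) \<times> {0..}" unfolding \<Omega>_def by blast
    then show ?thesis unfolding C_def \<Omega>_def using that sets.sets_into_space[OF that]
      by (auto intro!: SS_strip)
  qed
  define D where "D = {B :: real set. space M \<times> ({0..} \<inter> B) \<in> C}"
  have saD: "sigma_algebra UNIV D"
    unfolding sigma_algebra_iff2
  proof (intro conjI allI ballI impI)
    show "D \<subseteq> Pow UNIV" by simp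
    show "{} \<in> D" unfolding D_def by simp
  next
    fix s assume "s \<in> D"
    moreover have "space M \<times> ({0..} \<inter> (UNIV - s)) = \<Omega> - space M \<times> ({0..} \<inter> s)" unfolding \<Omega>_def by blast
    ultimately show "UNIV - s \<in> D" unfolding D_def by auto
  next
    fix A :: "nat \<Rightarrow> _" assume "range A \<subseteq> D"
    moreover have "space M \<times> ({0..} \<inter> (\<Union>i. A i)) = (\<Union>i. space M \<times> ({0..} \<inter> A i))" by blast
    ultimately show "(\<Union>i. A i) \<in> D" unfolding D_def by auto
  qed
  interpret D: sigma_algebra UNIV D by (fact saD)
  have gen: "range (\<lambda>(a, b). {a..b::real}) \<subseteq> D"
  proof (rule subsetI)
    fix X assume "X \<in> range (\<lambda>(a, b). {a..b::real})"
    then obtain a b :: real where X: "X = {a..b}" by auto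
    have r: "space M \<times> ({0..} \<inter> {a..b}) \<in> SS M"
    proof (intro SS_rect)
      have "compact ({0..} \<inter> {a..b::real})" by (intro closed_Int_compact closed_atLeast compact_Icc)
      then show "space M \<times> ({0..} \<inter> {a..b}) \<in> rect M" unfolding rect_def by blast
    qed
    have "\<Omega> - space M \<times> ({0..} \<inter> {a..b}) = space M \<times> ({0..} - {a..b})" unfolding \<Omega>_def by blast
    then have "\<Omega> - space M \<times> ({0..} \<inter> {a..b}) \<in> SS M" by (simp add: compl_interval_SS)
    then show "X \<in> D" unfolding D_def C_def \<Omega>_def X using r by auto
  qed
  have borel_D: "sets borel \<subseteq> D"
  proof -
    have "sets (borel :: real measure) = sigma_sets UNIV (range (\<lambda>(a, b). {a..b::real}))"
      by (subst borel_eq_atLeastAtMost) (simp add: sets_measure_of)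
    then show ?thesis using D.sigma_sets_subset[OF gen] by simp
  qed
  have gens: "{a \<times> b | a b. a \<in> sets M \<and> b \<in> sets (restrict_space borel {0::real..})} \<subseteq> C"
  proof safe
    fix a b assume a: "a \<in> sets M" and b: "b \<in> sets (restrict_space borel {0::real..})"
    obtain B where B: "B \<in> sets borel" "b = {0..} \<inter> B" using b unfolding sets_restrict_space by blast
    have "space M \<times> b \<in> C" using borel_D B unfolding D_def by auto
    moreover have "a \<times> b = (a \<times> {0..}) \<inter> (space M \<times> b)"
      using B sets.sets_into_space[OF a] by blast
    ultimately show "a \<times> b \<in> C" using strip[OF a] by (simp add: C.Int)
  qed
  have "sets (M \<Otimes>\<^sub>M restrict_space borel {0::real..}) \<subseteq> C"
    unfolding sets_pair_measure space_restrict_space \<Omega>_def[symmetric]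
    using C.sigma_sets_subset[OF gens] by (simp add: \<Omega>_def)
  then show ?thesis using A unfolding C_def by blast
qed

theorem measurable_projection:
  assumes fm: "finite_measure M" and cm: "complete_measure M"
    and A: "A \<in> sets (M \<Otimes>\<^sub>M restrict_space borel {0::real..})"
  shows "fst ` A \<in> sets M"
  by (rule SS_proj[OF fm cm sets_pair_SS[OF A]])

abbreviation MN :: "'w measure \<Rightarrow> ('w \<times> real) measure" where
  "MN M \<equiv> M \<Otimes>\<^sub>M restrict_space borel {0::real..}"

lemma space_MN: "space (MN M) = space M \<times> {0..}"
  by (simp add: space_pair_measure space_restrict_space)

definition entry :: "('w \<times> real) set \<Rightarrow> bool \<Rightarrow> real \<Rightarrow> 'w \<Rightarrow> ereal" where
  "entry S c x \<omega> = Inf {ereal u | u. (\<omega>, u) \<in> S \<and> (if c then x \<le> u else x < u)}"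

lemma entry_less: "entry S c x \<omega> < y \<longleftrightarrow> (\<exists>u. (\<omega>, u) \<in> S \<and> (if c then x \<le> u else x < u) \<and> ereal u < y)"
  unfolding entry_def Inf_less_iff by blast

lemma entry_le: "(\<omega>, u) \<in> S \<Longrightarrow> (if c then x \<le> u else x < u) \<Longrightarrow> entry S c x \<omega> \<le> ereal u"
  unfolding entry_def by (rule Inf_lower) blast

lemma entry_ge: "ereal x \<le> entry S c x \<omega>"
  unfolding entry_def by (rule Inf_greatest) (auto split: if_splits)

lemma W_sets:
  assumes fm: "finite_measure M" and cm: "complete_measure M" and S: "S \<in> sets (MN M)"
  shows "{\<omega> \<in> space M. \<exists>u. (\<omega>, u) \<in> S \<and> p \<le> u \<and> u < q} \<in> sets M"
proof -
  have pq: "{0::real..} \<inter> {p..<q} \<in> sets (restrict_space borel {0::real..})"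
    unfolding sets_restrict_space by (rule image_eqI[of _ _ "{p..<q}"]) auto
  have "S \<inter> (space M \<times> ({0..} \<inter> {p..<q})) \<in> sets (MN M)"
    by (intro sets.Int[OF S] pair_measureI[OF sets.top pq])
  then have "fst ` (S \<inter> (space M \<times> ({0..} \<inter> {p..<q}))) \<in> sets M"
    by (rule measurable_projection[OF fm cm])
  moreover have "fst ` (S \<inter> (space M \<times> ({0..} \<inter> {p..<q}))) = {\<omega> \<in> space M. \<exists>u. (\<omega>, u) \<in> S \<and> p \<le> u \<and> u < q}"
    using sets.sets_into_space[OF S] unfolding space_MN by force
  ultimately show ?thesis by simp
qed

lemma ereal_meas_less:
  fixes f :: "'a \<Rightarrow> ereal"
  assumes "\<And>a::real. {x \<in> space M. f x < ereal a} \<in> sets M"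
  shows "f \<in> borel_measurable M"
  unfolding borel_measurable_ereal_iff_Iio
proof
  fix a :: ereal
  show "f -` {..<a} \<inter> space M \<in> sets M"
  proof (cases a)
    case (real r)
    have "f -` {..<a} \<inter> space M = {x \<in> space M. f x < ereal r}" using real by auto
    then show ?thesis using assms by simp
  next
    case PInf
    have "f -` {..<a} \<inter> space M = (\<Union>n::nat. {x \<in> space M. f x < ereal (real n)})"
    proof (intro set_eqI iffI)
      fix x assume "x \<in> f -` {..<a} \<inter> space M"
      then have x: "x \<in> space M" "f x < \<infinity>" using PInf by auto
      then obtain n :: nat where "f x < ereal (real n)"
        using less_PInf_Ex_of_nat[of "f x"] by auto
      then show "x \<in> (\<Union>n::nat. {x \<in> space M. f x < ereal (real n)})" using x by blast
    qed (auto simp: PInf)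
    then show ?thesis using assms by auto
  next
    case MInf
    then have "f -` {..<a} \<inter> space M = {}" by auto
    then show ?thesis by simp
  qed
qed

lemma entry_meas:
  assumes fm: "finite_measure M" and cm: "complete_measure M" and S: "S \<in> sets (MN M)"
    and g: "g \<in> borel_measurable (MN M)" and g0: "\<And>p. p \<in> space (MN M) \<Longrightarrow> 0 \<le> g p"
  shows "(\<lambda>p. entry S c (g p) (fst p)) \<in> borel_measurable (MN M)"
proof (rule ereal_meas_less)
  fix a :: real
  define W where "W p q = {\<omega> \<in> space M. \<exists>u. (\<omega>, u) \<in> S \<and> p \<le> u \<and> u < q}" for p q
  have W: "W p q \<in> sets M" for p q unfolding W_def by (rule W_sets[OF fm cm S])
  have open_case: "(\<exists>u. (fst p, u) \<in> S \<and> g p < u \<and> u < a) \<longleftrightarrow>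
     (\<exists>r1 r2 :: rat. g p < of_rat r1 \<and> of_rat r2 \<le> a \<and> fst p \<in> W (of_rat r1) (of_rat r2))"
    if p: "p \<in> space (MN M)" for p
  proof
    assume "\<exists>u. (fst p, u) \<in> S \<and> g p < u \<and> u < a"
    then obtain u where u: "(fst p, u) \<in> S" "g p < u" "u < a" by blast
    obtain r1 :: rat where r1: "g p < of_rat r1" "of_rat r1 < u" using of_rat_dense[OF u(2)] by blast
    obtain r2 :: rat where r2: "u < of_rat r2" "of_rat r2 < a" using of_rat_dense[OF u(3)] by blast
    have "fst p \<in> space M" using p unfolding space_MN by auto
    then have "fst p \<in> W (of_rat r1) (of_rat r2)" unfolding W_def using u r1 r2 by auto
    then show "\<exists>r1 r2 :: rat. g p < of_rat r1 \<and> of_rat r2 \<le> a \<and> fst p \<in> W (of_rat r1) (of_rat r2)"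
      using r1 r2 by (intro exI[of _ r1] exI[of _ r2]) auto
  next
    assume "\<exists>r1 r2 :: rat. g p < of_rat r1 \<and> of_rat r2 \<le> a \<and> fst p \<in> W (of_rat r1) (of_rat r2)"
    then obtain r1 r2 :: rat where r: "g p < of_rat r1" "of_rat r2 \<le> a" "fst p \<in> W (of_rat r1) (of_rat r2)" by blast
    then obtain u where "(fst p, u) \<in> S" "of_rat r1 \<le> u" "u < of_rat r2" unfolding W_def by blast
    then show "\<exists>u. (fst p, u) \<in> S \<and> g p < u \<and> u < a" using r by (intro exI[of _ u]) auto
  qed
  have eq: "{p \<in> space (MN M). entry S c (g p) (fst p) < ereal a} =
    {p \<in> space (MN M). (c \<and> (fst p, g p) \<in> S \<and> g p < a) \<or>
       (\<exists>r1 r2 :: rat. g p < of_rat r1 \<and> of_rat r2 \<le> a \<and> fst p \<in> W (of_rat r1) (of_rat r2))}"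
  proof -
    have ent: "entry S c (g p) (fst p) < ereal a \<longleftrightarrow> (c \<and> (fst p, g p) \<in> S \<and> g p < a) \<or> (\<exists>u. (fst p, u) \<in> S \<and> g p < u \<and> u < a)" for p
      unfolding entry_less by (cases c) (auto simp: order.order_iff_strict)
    show ?thesis by (intro Collect_cong conj_cong refl) (simp add: ent open_case)
  qed
  have "g \<in> measurable (MN M) (restrict_space borel {0..})"
    by (rule measurable_restrict_space2) (use g0 g in auto)
  then have gp: "(\<lambda>p. (fst p, g p)) \<in> measurable (MN M) (MN M)"
    by (intro measurable_Pair measurable_fst)
  show "{p \<in> space (MN M). entry S c (g p) (fst p) < ereal a} \<in> sets (MN M)"
    unfolding eq using W gp S g by measurable
qed

lemma Q_meas:
  assumes fm: "finite_measure M" and cm: "complete_measure M" and S: "S \<in> sets (MN M)"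
    and g: "g \<in> borel_measurable (MN M)" and g0: "\<And>p. p \<in> space (MN M) \<Longrightarrow> 0 \<le> g p"
    and \<beta>: "\<beta> \<in> borel_measurable (MN M)"
  shows "{p \<in> space (MN M). \<exists>u. (fst p, u) \<in> S \<and> (if c then g p \<le> u else g p < u) \<and>
            (if d then ereal u \<le> \<beta> p else ereal u < \<beta> p)} \<in> sets (MN M)"
proof -
  define k where "k p = entry S c (g p) (fst p)" for p
  have k: "k \<in> borel_measurable (MN M)" unfolding k_def by (rule entry_meas[OF fm cm S g g0])
  have k0: "0 \<le> real_of_ereal (k p)" if p: "p \<in> space (MN M)" for p
  proof (cases "k p")
    case (real r)
    have "ereal (g p) \<le> k p" unfolding k_def by (rule entry_ge)
    then show ?thesis using real g0[OF p] by simp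
  qed simp_all
  have "(\<lambda>p. real_of_ereal (k p)) \<in> measurable (MN M) (restrict_space borel {0..})"
    by (rule measurable_restrict_space2) (use k0 k in auto)
  then have kp: "(\<lambda>p. (fst p, real_of_ereal (k p))) \<in> measurable (MN M) (MN M)"
    by (intro measurable_Pair measurable_fst)
  have kS[measurable]: "Measurable.pred (MN M) (\<lambda>p. (fst p, real_of_ereal (k p)) \<in> S)"
  proof -
    have "{p \<in> space (MN M). (fst p, real_of_ereal (k p)) \<in> S} = (\<lambda>p. (fst p, real_of_ereal (k p))) -` S \<inter> space (MN M)"
      by auto
    then show ?thesis unfolding pred_def using measurable_sets[OF kp S] by simp
  qed
  show ?thesis
  proof (cases d)
    case False
    have "{p \<in> space (MN M). \<exists>u. (fst p, u) \<in> S \<and> (if c then g p \<le> u else g p < u) \<and>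
            (if d then ereal u \<le> \<beta> p else ereal u < \<beta> p)} = {p \<in> space (MN M). k p < \<beta> p}"
      using False unfolding k_def entry_less by simp
    then show ?thesis using k \<beta> by simp
  next
    case True
    have "{p \<in> space (MN M). \<exists>u. (fst p, u) \<in> S \<and> (if c then g p \<le> u else g p < u) \<and>
            (if d then ereal u \<le> \<beta> p else ereal u < \<beta> p)} =
          {p \<in> space (MN M). k p < \<beta> p \<or> (k p \<noteq> \<infinity> \<and> k p \<noteq> -\<infinity> \<and> (fst p, real_of_ereal (k p)) \<in> S \<and>
             (if c then g p \<le> real_of_ereal (k p) else g p < real_of_ereal (k p)) \<and> k p \<le> \<beta> p)}"
    proof (intro Collect_cong conj_cong refl)
      fix p
      show "(\<exists>u. (fst p, u) \<in> S \<and> (if c then g p \<le> u else g p < u) \<and> (if d then ereal u \<le> \<beta> p else ereal u < \<beta> p)) =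
        (k p < \<beta> p \<or> (k p \<noteq> \<infinity> \<and> k p \<noteq> -\<infinity> \<and> (fst p, real_of_ereal (k p)) \<in> S \<and>
             (if c then g p \<le> real_of_ereal (k p) else g p < real_of_ereal (k p)) \<and> k p \<le> \<beta> p))"
      proof
        assume "\<exists>u. (fst p, u) \<in> S \<and> (if c then g p \<le> u else g p < u) \<and> (if d then ereal u \<le> \<beta> p else ereal u < \<beta> p)"
        then obtain u where u: "(fst p, u) \<in> S" "if c then g p \<le> u else g p < u" "ereal u \<le> \<beta> p"
          using True by auto
        have ku: "k p \<le> ereal u" unfolding k_def by (rule entry_le[OF u(1) u(2)])
        show "k p < \<beta> p \<or> (k p \<noteq> \<infinity> \<and> k p \<noteq> -\<infinity> \<and> (fst p, real_of_ereal (k p)) \<in> S \<and>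
             (if c then g p \<le> real_of_ereal (k p) else g p < real_of_ereal (k p)) \<and> k p \<le> \<beta> p)"
        proof (cases "k p < \<beta> p")
          case False
          then have "k p = ereal u" using ku u(3) by auto
          then show ?thesis using u by simp
        qed simp
      next
        assume A: "k p < \<beta> p \<or> (k p \<noteq> \<infinity> \<and> k p \<noteq> -\<infinity> \<and> (fst p, real_of_ereal (k p)) \<in> S \<and>
             (if c then g p \<le> real_of_ereal (k p) else g p < real_of_ereal (k p)) \<and> k p \<le> \<beta> p)"
        show "\<exists>u. (fst p, u) \<in> S \<and> (if c then g p \<le> u else g p < u) \<and> (if d then ereal u \<le> \<beta> p else ereal u < \<beta> p)"
        proof (cases "k p < \<beta> p")
          case True
          then obtain u where "(fst p, u) \<in> S" "if c then g p \<le> u else g p < u" "ereal u < \<beta> p"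
            unfolding k_def entry_less by blast
          then show ?thesis using \<open>d\<close> by (intro exI[of _ u]) auto
        next
          case False
          then have B: "k p \<noteq> \<infinity>" "k p \<noteq> -\<infinity>" "(fst p, real_of_ereal (k p)) \<in> S"
             "if c then g p \<le> real_of_ereal (k p) else g p < real_of_ereal (k p)" "k p \<le> \<beta> p"
            using A by auto
          then have "ereal (real_of_ereal (k p)) = k p" by (cases "k p") auto
          then show ?thesis using B \<open>d\<close> by (intro exI[of _ "real_of_ereal (k p)"]) auto
        qed
      qed
    qed
    moreover have "{p \<in> space (MN M). k p < \<beta> p \<or> (k p \<noteq> \<infinity> \<and> k p \<noteq> -\<infinity> \<and> (fst p, real_of_ereal (k p)) \<in> S \<and>
             (if c then g p \<le> real_of_ereal (k p) else g p < real_of_ereal (k p)) \<and> k p \<le> \<beta> p)} \<in> sets (MN M)"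
      using k \<beta> g by measurable
    ultimately show ?thesis by simp
  qed
qed

lemma lower_iff:
  fixes s l :: real
  shows "(0 \<le> s \<and> (if lc then l \<le> s else l < s)) \<longleftrightarrow> (if lc \<or> l < 0 then max 0 l \<le> s else max 0 l < s)"
  by (auto simp: max_def)

lemma upper_iff:
  fixes u t :: real and U :: ereal
  shows "(if uc then ereal (u - t) \<le> U else ereal (u - t) < U) \<longleftrightarrow> (if uc then ereal u \<le> U + ereal t else ereal u < U + ereal t)"
  by (cases U) auto

lemma sat_set_eq: "sat_set M X B \<phi> = {p \<in> space (MN M). holds X B (fst p) (snd p) \<phi>}"
  by (auto simp: sat_set_def space_MN)

lemma until_iff:
  "holds X B \<omega> t (Until \<phi>1 (Intv l lc U uc) \<phi>2) \<longleftrightarrow>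
   (\<exists>u. holds X B \<omega> u \<phi>2 \<and> (0 \<le> u - t \<and> (if lc then l \<le> u - t else l < u - t)) \<and>
        (if uc then ereal (u - t) \<le> U else ereal (u - t) < U) \<and> (\<forall>c. t \<le> c \<and> c < u \<longrightarrow> holds X B \<omega> c \<phi>1))"
proof
  assume "holds X B \<omega> t (Until \<phi>1 (Intv l lc U uc) \<phi>2)"
  then obtain s where s: "s \<in> intv_set (Intv l lc U uc)" "holds X B \<omega> (t + s) \<phi>2"
    "\<forall>s'\<in>{t..<t + s}. holds X B \<omega> s' \<phi>1" by auto
  then show "\<exists>u. holds X B \<omega> u \<phi>2 \<and> (0 \<le> u - t \<and> (if lc then l \<le> u - t else l < u - t)) \<and>
        (if uc then ereal (u - t) \<le> U else ereal (u - t) < U) \<and> (\<forall>c. t \<le> c \<and> c < u \<longrightarrow> holds X B \<omega> c \<phi>1)"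
    by (intro exI[of _ "t + s"]) (auto simp: intv_set_def)
next
  assume "\<exists>u. holds X B \<omega> u \<phi>2 \<and> (0 \<le> u - t \<and> (if lc then l \<le> u - t else l < u - t)) \<and>
        (if uc then ereal (u - t) \<le> U else ereal (u - t) < U) \<and> (\<forall>c. t \<le> c \<and> c < u \<longrightarrow> holds X B \<omega> c \<phi>1)"
  then obtain u where u: "holds X B \<omega> u \<phi>2" "0 \<le> u - t" "if lc then l \<le> u - t else l < u - t"
    "if uc then ereal (u - t) \<le> U else ereal (u - t) < U" "\<forall>c. t \<le> c \<and> c < u \<longrightarrow> holds X B \<omega> c \<phi>1"
    by blast
  have "u - t \<in> intv_set (Intv l lc U uc)" using u(2-4) by (auto simp: intv_set_def)
  moreover have "holds X B \<omega> (t + (u - t)) \<phi>2" using u(1) by simp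
  moreover have "\<forall>s'\<in>{t..<t + (u - t)}. holds X B \<omega> s' \<phi>1" using u(5) by auto
  ultimately show "holds X B \<omega> t (Until \<phi>1 (Intv l lc U uc) \<phi>2)" unfolding holds.simps by blast
qed

lemma snd_meas: "snd \<in> borel_measurable (MN M)"
  using measurable_snd[of M "restrict_space borel {0::real..}"] by (simp add: measurable_restrict_space2_iff)

lemma main_sets:
  assumes fm: "finite_measure M" and cm: "complete_measure M"
    and Xm: "(\<lambda>(\<omega>, t). X t \<omega>) \<in> measurable (MN M) borel"
    and Bm: "\<And>a. B a \<in> sets borel"
  shows "sat_set M X B \<phi> \<in> sets (MN M)"
proof (induction \<phi>)
  case (Atom a)
  have "sat_set M X B (Atom a) = (\<lambda>(\<omega>, t). X t \<omega>) -` B a \<inter> space (MN M)"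
    unfolding sat_set_eq by auto
  then show ?case using measurable_sets[OF Xm Bm] by simp
next
  case (And \<phi>1 \<phi>2)
  have "sat_set M X B (And \<phi>1 \<phi>2) = sat_set M X B \<phi>1 \<inter> sat_set M X B \<phi>2"
    unfolding sat_set_eq by auto
  then show ?case using And by auto
next
  case (Not \<phi>)
  have "sat_set M X B (Not \<phi>) = space (MN M) - sat_set M X B \<phi>"
    unfolding sat_set_eq by auto
  then show ?case using Not by auto
next
  case (Until \<phi>1 I \<phi>2)
  obtain l lc U uc where I: "I = Intv l lc U uc" by (cases I)
  define S1 where "S1 = sat_set M X B \<phi>1"
  define S2 where "S2 = sat_set M X B \<phi>2"
  define C where "C = space (MN M) - S1"
  have S2: "S2 \<in> sets (MN M)" unfolding S2_def by (rule Until.IH(2))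
  have C: "C \<in> sets (MN M)" unfolding C_def S1_def using Until.IH(1) by auto
  define h where "h p = entry C True (snd p) (fst p)" for p
  have h: "h \<in> borel_measurable (MN M)" unfolding h_def
    by (rule entry_meas[OF fm cm C snd_meas]) (auto simp: space_MN)
  define x where "x p = snd p + max 0 l" for p :: "'a \<times> real"
  have x: "x \<in> borel_measurable (MN M)" unfolding x_def using snd_meas by measurable
  have x0: "0 \<le> x p" if "p \<in> space (MN M)" for p using that unfolding x_def space_MN by auto
  define c0 where "c0 = (lc \<or> l < 0)"
  define \<beta>2 where "\<beta>2 p = U + ereal (snd p)" for p :: "'a \<times> real"
  have \<beta>2: "\<beta>2 \<in> borel_measurable (MN M)" unfolding \<beta>2_def using snd_meas by measurable
  have key: "holds X B (fst p) (snd p) (Until \<phi>1 I \<phi>2) \<longleftrightarrow>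
     (\<exists>u. (fst p, u) \<in> S2 \<and> (if c0 then x p \<le> u else x p < u) \<and> ereal u \<le> h p \<and>
          (if uc then ereal u \<le> \<beta>2 p else ereal u < \<beta>2 p))"
    if p: "p \<in> space (MN M)" for p
  proof -
    obtain \<omega> t where pt: "p = (\<omega>, t)" by (cases p)
    have \<omega>: "\<omega> \<in> space M" and t0: "0 \<le> t" using p pt unfolding space_MN by auto
    have low: "(0 \<le> u - t \<and> (if lc then l \<le> u - t else l < u - t)) \<longleftrightarrow> (if c0 then x p \<le> u else x p < u)" for u
      using lower_iff[of "u - t" lc l] unfolding c0_def x_def pt by auto
    have up: "(if uc then ereal (u - t) \<le> U else ereal (u - t) < U) \<longleftrightarrow> (if uc then ereal u \<le> \<beta>2 p else ereal u < \<beta>2 p)" for u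
      using upper_iff[of uc u t U] unfolding \<beta>2_def pt by simp
    have hh: "(\<forall>c. t \<le> c \<and> c < u \<longrightarrow> holds X B \<omega> c \<phi>1) \<longleftrightarrow> ereal u \<le> h p" for u
    proof -
      have "ereal u \<le> h p \<longleftrightarrow> \<not> h p < ereal u" by auto
      also have "\<dots> \<longleftrightarrow> \<not> (\<exists>c. (\<omega>, c) \<in> C \<and> t \<le> c \<and> ereal c < ereal u)"
        unfolding h_def pt entry_less by simp
      also have "\<dots> \<longleftrightarrow> (\<forall>c. t \<le> c \<and> c < u \<longrightarrow> holds X B \<omega> c \<phi>1)"
        unfolding C_def S1_def sat_set_eq space_MN using \<omega> t0 by auto
      finally show ?thesis by simp
    qed
    have s2: "t \<le> u \<Longrightarrow> (\<omega>, u) \<in> S2 \<longleftrightarrow> holds X B \<omega> u \<phi>2" for u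
      unfolding S2_def sat_set_eq space_MN using \<omega> t0 by auto
    show ?thesis
    proof
      assume "holds X B (fst p) (snd p) (Until \<phi>1 I \<phi>2)"
      then have "holds X B \<omega> t (Until \<phi>1 (Intv l lc U uc) \<phi>2)" unfolding pt I by simp
      then obtain u where u: "holds X B \<omega> u \<phi>2" "0 \<le> u - t \<and> (if lc then l \<le> u - t else l < u - t)"
        "if uc then ereal (u - t) \<le> U else ereal (u - t) < U" "\<forall>c. t \<le> c \<and> c < u \<longrightarrow> holds X B \<omega> c \<phi>1"
        unfolding until_iff by blast
      show "\<exists>u. (fst p, u) \<in> S2 \<and> (if c0 then x p \<le> u else x p < u) \<and> ereal u \<le> h p \<and>
          (if uc then ereal u \<le> \<beta>2 p else ereal u < \<beta>2 p)"
        using u s2[of u] low[of u] up[of u] hh[of u] unfolding pt by (intro exI[of _ u]) auto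
    next
      assume "\<exists>u. (fst p, u) \<in> S2 \<and> (if c0 then x p \<le> u else x p < u) \<and> ereal u \<le> h p \<and>
          (if uc then ereal u \<le> \<beta>2 p else ereal u < \<beta>2 p)"
      then obtain u where u: "(\<omega>, u) \<in> S2" "if c0 then x p \<le> u else x p < u" "ereal u \<le> h p"
          "if uc then ereal u \<le> \<beta>2 p else ereal u < \<beta>2 p" unfolding pt by auto
      have lu: "0 \<le> u - t \<and> (if lc then l \<le> u - t else l < u - t)" using low[of u] u(2) by simp
      then have "holds X B \<omega> u \<phi>2" using s2[of u] u(1) by simp
      then have "holds X B \<omega> t (Until \<phi>1 (Intv l lc U uc) \<phi>2)"
        unfolding until_iff using lu up[of u] u(4) hh[of u] u(3) by blast
      then show "holds X B (fst p) (snd p) (Until \<phi>1 I \<phi>2)" unfolding pt I by simp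
    qed
  qed
  define Q where "Q \<beta> d = {p \<in> space (MN M). \<exists>u. (fst p, u) \<in> S2 \<and> (if c0 then x p \<le> u else x p < u) \<and>
            (if d then ereal u \<le> \<beta> p else ereal u < \<beta> p)}" for \<beta> d
  have Q: "\<beta> \<in> borel_measurable (MN M) \<Longrightarrow> Q \<beta> d \<in> sets (MN M)" for \<beta> d
    unfolding Q_def by (rule Q_meas[OF fm cm S2 x x0])
  show ?case
  proof (cases uc)
    case True
    have "sat_set M X B (Until \<phi>1 I \<phi>2) = Q (\<lambda>p. min (h p) (\<beta>2 p)) True"
      unfolding sat_set_eq Q_def
    proof (intro Collect_cong conj_cong refl)
      fix p assume p: "p \<in> space (MN M)"
      show "holds X B (fst p) (snd p) (Until \<phi>1 I \<phi>2) = (\<exists>u. (fst p, u) \<in> S2 \<and> (if c0 then x p \<le> u else x p < u) \<and>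
            (if True then ereal u \<le> min (h p) (\<beta>2 p) else ereal u < min (h p) (\<beta>2 p)))"
        using key[OF p] True by (simp del: holds.simps)
    qed
    moreover have "(\<lambda>p. min (h p) (\<beta>2 p)) \<in> borel_measurable (MN M)" using h \<beta>2 by measurable
    ultimately show ?thesis using Q by simp
  next
    case False
    have split: "(\<exists>u. A u \<and> ereal u \<le> hh \<and> ereal u < b) \<longleftrightarrow>
        (hh < b \<and> (\<exists>u. A u \<and> ereal u \<le> hh)) \<or> (\<not> hh < b \<and> (\<exists>u. A u \<and> ereal u < b))" for A hh b
    proof (cases "hh < b")
      case True then show ?thesis using le_less_trans by blast
    next
      case False then show ?thesis by (auto simp: not_less intro: less_imp_le less_le_trans)
    qed
    have "sat_set M X B (Until \<phi>1 I \<phi>2) = {p \<in> space (MN M).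
      (h p < \<beta>2 p \<and> (\<exists>u. ((fst p, u) \<in> S2 \<and> (if c0 then x p \<le> u else x p < u)) \<and> ereal u \<le> h p)) \<or>
      (\<not> h p < \<beta>2 p \<and> (\<exists>u. ((fst p, u) \<in> S2 \<and> (if c0 then x p \<le> u else x p < u)) \<and> ereal u < \<beta>2 p))}"
      unfolding sat_set_eq
    proof (intro Collect_cong conj_cong refl)
      fix p assume p: "p \<in> space (MN M)"
      have "holds X B (fst p) (snd p) (Until \<phi>1 I \<phi>2) \<longleftrightarrow>
        (\<exists>u. ((fst p, u) \<in> S2 \<and> (if c0 then x p \<le> u else x p < u)) \<and> ereal u \<le> h p \<and> ereal u < \<beta>2 p)"
        using key[OF p] False by (simp del: holds.simps add: conj_assoc)
      then show "holds X B (fst p) (snd p) (Until \<phi>1 I \<phi>2) \<longleftrightarrow>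
        (h p < \<beta>2 p \<and> (\<exists>u. ((fst p, u) \<in> S2 \<and> (if c0 then x p \<le> u else x p < u)) \<and> ereal u \<le> h p)) \<or>
        (\<not> h p < \<beta>2 p \<and> (\<exists>u. ((fst p, u) \<in> S2 \<and> (if c0 then x p \<le> u else x p < u)) \<and> ereal u < \<beta>2 p))"
        by (simp only: split)
    qed
    also have "\<dots> = ({p \<in> space (MN M). h p < \<beta>2 p} \<inter> Q h True) \<union> ({p \<in> space (MN M). \<not> h p < \<beta>2 p} \<inter> Q \<beta>2 False)"
      unfolding Q_def by auto
    finally have eq: "sat_set M X B (Until \<phi>1 I \<phi>2) = ({p \<in> space (MN M). h p < \<beta>2 p} \<inter> Q h True) \<union> ({p \<in> space (MN M). \<not> h p < \<beta>2 p} \<inter> Q \<beta>2 False)" .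
    have "{p \<in> space (MN M). h p < \<beta>2 p} \<in> sets (MN M)" using h \<beta>2 by measurable
    moreover have "{p \<in> space (MN M). \<not> h p < \<beta>2 p} \<in> sets (MN M)" using h \<beta>2 by measurable
    ultimately show ?thesis unfolding eq using Q[OF h] Q[OF \<beta>2] by auto
  qed
qed

theorem theorem4p7:
  fixes M :: "'w measure"
    and X :: "real \<Rightarrow> 'w \<Rightarrow> 'e::polish_space"
    and B :: "'ap \<Rightarrow> 'e set"
  assumes "prob_space M"
    and "complete_measure M"
    and "(\<lambda>(\<omega>, t). X t \<omega>) \<in> measurable (M \<Otimes>\<^sub>M restrict_space borel {0..}) borel"
    and "\<And>a. B a \<in> sets borel"
  shows "sat_set M X B \<phi> \<in> sets (M \<Otimes>\<^sub>M restrict_space borel {0..})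
         \<and> (\<forall>t\<ge>0. sat_set_at M X B \<phi> t \<in> sets M)"
proof -
  have fm: "finite_measure M" using assms(1) unfolding prob_space_def by blast
  have S: "sat_set M X B \<phi> \<in> sets (MN M)"
    by (rule main_sets[OF fm assms(2) assms(3) assms(4)])
  have "sat_set_at M X B \<phi> t \<in> sets M" if t: "0 \<le> t" for t
  proof -
    have m: "(\<lambda>\<omega>. (\<omega>, t)) \<in> measurable M (MN M)"
      by (rule measurable_Pair[OF measurable_ident_sets[OF refl] measurable_const])
         (use t in \<open>simp add: space_restrict_space\<close>)
    have "sat_set_at M X B \<phi> t = (\<lambda>\<omega>. (\<omega>, t)) -` sat_set M X B \<phi> \<inter> space M"
      using t unfolding sat_set_at_def sat_set_def by auto
    then show ?thesis using measurable_sets[OF m S] by simp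
  qed
  then show ?thesis using S by blast
qed

end
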